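(* For every odd integer $s\ge3$ there exists a linear $(1,2,s,2)$-AONT.
   Context: A linear $(t_i,t_o,s,q)$-AONT is given by an invertible $s\times s$ matrix $M$ over $\mathbb{F}_q$ defining the map $\mathbf{x}\mapsto\mathbf{y}=\mathbf{x}M^{-1}$ on row vectors of $\mathbb{F}_q^s$, such that for every set $I$ of $t_i$ input coordinates and every set $J$ of $s-t_o$ output coordinates, the pair $((x_i)_{i\in I},(y_j)_{j\in J})$ takes every value in $\mathbb{F}_q^{t_i+s-t_o}$ equally often as $\mathbf{x}$ ranges over $\mathbb{F}_q^s$. Equivalently, $M$ is invertible and every $t_o\times t_i$ submatrix of $M$ has rank $t_i$. *)

theory Defs
  imports Main "HOL-Library.FuncSet"
begin

text \<open>Vectors in F_q^s are modelled as extensional functions on the index set {0..<s};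
  s x s matrices as functions nat => nat => 'a (only entries with indices < s matter).\<close>

definition vecs :: "nat \<Rightarrow> (nat \<Rightarrow> 'a) set" where
  "vecs s = PiE {0..<s} (\<lambda>_. UNIV)"

definition is_inverse_mat :: "nat \<Rightarrow> (nat \<Rightarrow> nat \<Rightarrow> 'a::field) \<Rightarrow> (nat \<Rightarrow> nat \<Rightarrow> 'a) \<Rightarrow> bool" where
  "is_inverse_mat s M N \<longleftrightarrow>
     (\<forall>i<s. \<forall>j<s. (\<Sum>k<s. M i k * N k j) = (if i = j then 1 else 0)) \<and>
     (\<forall>i<s. \<forall>j<s. (\<Sum>k<s. N i k * M k j) = (if i = j then 1 else 0))"

definition vec_mat_mult :: "nat \<Rightarrow> (nat \<Rightarrow> 'a::field) \<Rightarrow> (nat \<Rightarrow> nat \<Rightarrow> 'a) \<Rightarrow> nat \<Rightarrow> 'a" where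
  "vec_mat_mult s x N = (\<lambda>j. if j < s then (\<Sum>k<s. x k * N k j) else undefined)"

definition aont_count :: "nat \<Rightarrow> (nat \<Rightarrow> nat \<Rightarrow> 'a::{finite,field}) \<Rightarrow> nat set \<Rightarrow> nat set
     \<Rightarrow> (nat \<Rightarrow> 'a) \<Rightarrow> (nat \<Rightarrow> 'a) \<Rightarrow> nat" where
  "aont_count s Minv I J a b =
     card {x \<in> vecs s. (\<forall>i\<in>I. x i = a i) \<and> (\<forall>j\<in>J. vec_mat_mult s x Minv j = b j)}"

definition linear_AONT :: "nat \<Rightarrow> nat \<Rightarrow> nat \<Rightarrow> nat \<Rightarrow> (nat \<Rightarrow> nat \<Rightarrow> 'a::{finite,field}) \<Rightarrow> bool" where
  "linear_AONT t_i t_o s q M \<longleftrightarrow>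
     card (UNIV :: 'a set) = q \<and>
     (\<exists>Minv. is_inverse_mat s M Minv \<and>
       (\<forall>I J. I \<subseteq> {0..<s} \<longrightarrow> card I = t_i \<longrightarrow> J \<subseteq> {0..<s} \<longrightarrow> card J = s - t_o \<longrightarrow>
          (\<forall>a b a' b'. aont_count s Minv I J a b = aont_count s Minv I J a' b')))"

end

theory Submission
  imports Defs
begin

lemma char2_one: assumes "card (UNIV :: 'a::{finite,field} set) = 2" shows "(1::'a) + 1 = 0"
proof (rule ccontr)
  assume z: "(1::'a) + 1 \<noteq> 0"
  have z1: "(1::'a) + 1 \<noteq> 1" by (metis add_cancel_right_right one_neq_zero)
  have "card {0::'a, 1, 1 + 1} = 3" using z z1 by (simp add: eq_commute)
  moreover have "card {0::'a, 1, 1 + 1} \<le> card (UNIV :: 'a set)" by (rule card_mono) auto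
  ultimately show False using assms by simp
qed

lemma of_nat_char2:
  assumes "(1::'a::field) + 1 = 0"
  shows "(of_nat n :: 'a) = (if even n then 0 else 1)"
proof (induction n)
  case 0 then show ?case by simp
next
  case (Suc n) then show ?case using assms by (auto simp: add.commute)
qed

lemma sum_if_one:
  fixes c d :: "'a::field"
  assumes "i < s"
  shows "(\<Sum>k<s. if k = i then c else d) = c + of_nat (s - 1) * d"
proof -
  have "(\<Sum>k<s. if k = i then c else d) = (\<Sum>k<s. (if k = i then c - d else 0) + d)"
    by (rule sum.cong) auto
  also have "\<dots> = (c - d) + of_nat s * d" using assms by (simp add: sum.distrib)
  also have "\<dots> = c + of_nat (s - 1) * d" using assms
    by (cases s) (auto simp: algebra_simps)
  finally show ?thesis .
qed

lemma sum_if_two: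
  fixes f :: "nat \<Rightarrow> 'a::field"
  assumes "p < s" "r < s" "p \<noteq> r"
  shows "(\<Sum>k<s. if k = p \<or> k = r then f k else 0) = f p + f r"
proof -
  have "(\<Sum>k<s. if k = p \<or> k = r then f k else 0)
      = (\<Sum>k<s. (if k = p then f k else 0) + (if k = r then f k else 0))"
    by (rule sum.cong) (use assms in auto)
  also have "\<dots> = f p + f r" using assms by (simp add: sum.distrib)
  finally show ?thesis .
qed

definition Mm :: "nat \<Rightarrow> nat \<Rightarrow> 'a::field" where
  "Mm k j = (if j = 0 then 1 else if k = j then 0 else 1)"

definition Nm :: "nat \<Rightarrow> nat \<Rightarrow> 'a::field" where
  "Nm k j = (if j = 0 then 1 else if k = 0 \<or> k = j then 1 else 0)"

lemma inv_Mm: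
  assumes c2: "(1::'a::field) + 1 = 0" and "odd s"
  shows "is_inverse_mat s (Mm :: nat \<Rightarrow> nat \<Rightarrow> 'a) Nm"
proof -
  have s1: "(of_nat s :: 'a) = 1" using of_nat_char2[OF c2, of s] assms by simp
  have s0: "(of_nat (s - 1) :: 'a) = 0" using of_nat_char2[OF c2, of "s - 1"] assms by simp
  have A: "(\<Sum>k<s. Mm i k * Nm k j) = (if i = j then 1 else (0::'a))" if "i < s" "j < s" for i j
  proof (cases "j = 0")
    case True
    show ?thesis
    proof (cases "i = 0")
      case True
      then have "(\<Sum>k<s. Mm i k * Nm k j) = (\<Sum>k<s. (1::'a))"
        using \<open>j = 0\<close> by (intro sum.cong) (auto simp: Mm_def Nm_def)
      then show ?thesis using s1 True \<open>j = 0\<close> by simp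
    next
      case False
      then have "(\<Sum>k<s. Mm i k * Nm k j) = (\<Sum>k<s. if k = i then 0 else (1::'a))"
        using \<open>j = 0\<close> by (intro sum.cong) (auto simp: Mm_def Nm_def)
      then show ?thesis using s0 False \<open>j = 0\<close> sum_if_one[OF \<open>i < s\<close>, of 0 "1::'a"] by simp
    qed
  next
    case False
    have "(\<Sum>k<s. Mm i k * Nm k j) = (\<Sum>k<s. if k = 0 \<or> k = j then Mm i k else (0::'a))"
      using False by (intro sum.cong) (auto simp: Nm_def)
    also have "\<dots> = Mm i 0 + Mm i j" using False that by (intro sum_if_two) auto
    finally show ?thesis using False c2 by (auto simp: Mm_def)
  qed
  have B: "(\<Sum>k<s. Nm i k * Mm k j) = (if i = j then 1 else (0::'a))" if "i < s" "j < s" for i j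
  proof (cases "i = 0")
    case True
    then have e: "(\<Sum>k<s. Nm i k * Mm k j) = (\<Sum>k<s. Mm k j :: 'a)"
      by (intro sum.cong) (auto simp: Nm_def)
    show ?thesis
    proof (cases "j = 0")
      case True
      then show ?thesis using e s1 \<open>i = 0\<close> by (simp add: Mm_def)
    next
      case False
      then have "(\<Sum>k<s. Mm k j :: 'a) = (\<Sum>k<s. if k = j then 0 else (1::'a))"
        by (intro sum.cong) (auto simp: Mm_def)
      then show ?thesis using e s0 False \<open>i = 0\<close> sum_if_one[OF \<open>j < s\<close>, of 0 "1::'a"] by simp
    qed
  next
    case False
    have "(\<Sum>k<s. Nm i k * Mm k j) = (\<Sum>k<s. if k = 0 \<or> k = i then Mm k j else (0::'a))"
      using False by (intro sum.cong) (auto simp: Nm_def)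
    also have "\<dots> = Mm 0 j + Mm i j" using False that by (intro sum_if_two) auto
    finally show ?thesis using False c2 by (auto simp: Mm_def)
  qed
  show ?thesis unfolding is_inverse_mat_def using A B by blast
qed

lemma vmm_vecs: "vec_mat_mult s x N \<in> vecs s"
  by (auto simp: vecs_def vec_mat_mult_def PiE_iff extensional_def)

lemma vmm_inv:
  assumes "is_inverse_mat s M N" "j < s"
  shows "vec_mat_mult s (vec_mat_mult s y M) N j = y j"
proof -
  have "vec_mat_mult s (vec_mat_mult s y M) N j = (\<Sum>k<s. (\<Sum>l<s. y l * M l k) * N k j)"
    using assms(2) by (simp add: vec_mat_mult_def)
  also have "\<dots> = (\<Sum>l<s. y l * (\<Sum>k<s. M l k * N k j))"
  proof -
    have "(\<Sum>k<s. (\<Sum>l<s. y l * M l k) * N k j) = (\<Sum>k<s. \<Sum>l<s. y l * (M l k * N k j))"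
      by (simp add: sum_distrib_right mult.assoc)
    also have "\<dots> = (\<Sum>l<s. \<Sum>k<s. y l * (M l k * N k j))"
      by (rule sum.swap)
    also have "\<dots> = (\<Sum>l<s. y l * (\<Sum>k<s. M l k * N k j))"
      by (simp add: sum_distrib_left)
    finally show ?thesis .
  qed
  also have "\<dots> = (\<Sum>l<s. if l = j then y l else 0)"
    using assms unfolding is_inverse_mat_def by (intro sum.cong) auto
  also have "\<dots> = y j" using assms(2) by simp
  finally show ?thesis .
qed

lemma vmm_add: "j < s \<Longrightarrow> vec_mat_mult s (\<lambda>k. x k + z k) N j = vec_mat_mult s x N j + vec_mat_mult s z N j"
  by (simp add: vec_mat_mult_def sum.distrib distrib_right)

lemma vmm_diff: "j < s \<Longrightarrow> vec_mat_mult s (\<lambda>k. x k - z k) N j = vec_mat_mult s x N j - vec_mat_mult s z N j"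
  by (simp add: vec_mat_mult_def sum_subtractf left_diff_distrib)

lemma vmm_restrict: "vec_mat_mult s (restrict x {0..<s}) N = vec_mat_mult s x N"
  by (auto simp: vec_mat_mult_def intro!: sum.cong)

lemma count_translate:
  fixes N :: "nat \<Rightarrow> nat \<Rightarrow> 'a::{finite,field}"
  assumes I: "I \<subseteq> {0..<s}" and J: "J \<subseteq> {0..<s}"
    and xz: "xz \<in> vecs s" "\<forall>i\<in>I. xz i = a i" "\<forall>j\<in>J. vec_mat_mult s xz N j = b j"
  shows "aont_count s N I J a b = aont_count s N I J (\<lambda>_. 0) (\<lambda>_. 0)"
proof -
  let ?S = "{x \<in> vecs s. (\<forall>i\<in>I. x i = a i) \<and> (\<forall>j\<in>J. vec_mat_mult s x N j = b j)}"
  let ?T = "{x \<in> vecs s. (\<forall>i\<in>I. x i = (0::'a)) \<and> (\<forall>j\<in>J. vec_mat_mult s x N j = 0)}"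
  define f where "f x = restrict (\<lambda>k. x k - xz k) {0..<s}" for x :: "nat \<Rightarrow> 'a"
  define g where "g x = restrict (\<lambda>k. x k + xz k) {0..<s}" for x :: "nat \<Rightarrow> 'a"
  have "bij_betw f ?S ?T"
  proof (rule bij_betw_byWitness[where f' = g])
    show "\<forall>x\<in>?S. g (f x) = x"
      by (auto simp: f_def g_def vecs_def PiE_iff extensional_def fun_eq_iff)
    show "\<forall>x\<in>?T. f (g x) = x"
      by (auto simp: f_def g_def vecs_def PiE_iff extensional_def fun_eq_iff)
    show "f ` ?S \<subseteq> ?T"
      using I J xz by (auto simp: f_def vecs_def vmm_restrict vmm_diff)
    show "g ` ?T \<subseteq> ?S"
      using I J xz by (auto simp: g_def vecs_def vmm_restrict vmm_add)
  qed
  then have "card ?S = card ?T" by (rule bij_betw_same_card)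
  then show ?thesis by (simp add: aont_count_def)
qed

theorem mainTheorem11:
  fixes s :: nat
  assumes "card (UNIV :: 'a::{finite,field} set) = 2"
    and "odd s" and "s \<ge> 3"
  shows "\<exists>M :: nat \<Rightarrow> nat \<Rightarrow> 'a. linear_AONT 1 2 s 2 M"
proof -
  have c2: "(1::'a) + 1 = 0" using char2_one assms(1) by blast
  have inv: "is_inverse_mat s (Mm :: nat \<Rightarrow> nat \<Rightarrow> 'a) Nm" using inv_Mm[OF c2 assms(2)] .
  have key: "aont_count s (Nm :: nat \<Rightarrow> nat \<Rightarrow> 'a) I J a b = aont_count s (Nm :: nat \<Rightarrow> nat \<Rightarrow> 'a) I J (\<lambda>_. 0) (\<lambda>_. 0)"
    if I: "I \<subseteq> {0..<s}" "card I = 1" and J: "J \<subseteq> {0..<s}" "card J = s - 2" for I J a b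
  proof -
    obtain i where Ii: "I = {i}" using I(2) card_1_singletonE by blast
    have "i < s" using I Ii by auto
    have "card ({0..<s} - J) = 2" using J finite_subset[OF J(1)] assms(3)
      by (simp add: card_Diff_subset)
    then obtain c1 c2 where c12: "c1 \<noteq> c2" "{0..<s} - J = {c1, c2}" using card_2_iff by metis
    obtain c where c: "c < s" "c \<notin> J" "(Mm c i :: 'a) \<noteq> 0"
    proof -
      have "c1 < s" "c1 \<notin> J" "c2 < s" "c2 \<notin> J" using c12 by (metis Diff_iff atLeastLessThan_iff insertI1 insertI2)+
      moreover have "(Mm c1 i :: 'a) \<noteq> 0 \<or> (Mm c2 i :: 'a) \<noteq> 0"
        using c12(1) by (auto simp: Mm_def split: if_splits)
      ultimately show ?thesis using that by blast
    qed
    define y' where "y' = restrict (\<lambda>k. if k \<in> J then b k else (0::'a)) {0..<s}"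
    define t where "t = (a i - (\<Sum>k<s. y' k * Mm k i)) / Mm c i"
    define y where "y = restrict (\<lambda>k. y' k + (if k = c then t else 0)) {0..<s}"
    define x0 where "x0 = vec_mat_mult s y (Mm :: nat \<Rightarrow> nat \<Rightarrow> 'a)"
    have "(\<Sum>k<s. y k * Mm k i) = (\<Sum>k<s. y' k * Mm k i + (if k = c then t * Mm c i else 0))"
      by (intro sum.cong) (auto simp: y_def distrib_right)
    also have "\<dots> = (\<Sum>k<s. y' k * Mm k i) + t * Mm c i" using c by (simp add: sum.distrib)
    also have "\<dots> = a i" using c by (simp add: t_def)
    finally have xi: "x0 i = a i" using \<open>i < s\<close> by (simp add: x0_def vec_mat_mult_def)
    have yJ: "vec_mat_mult s x0 Nm j = b j" if "j \<in> J" for j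
    proof -
      have "j < s" using that J by auto
      then have "vec_mat_mult s x0 Nm j = y j" using vmm_inv[OF inv] by (simp add: x0_def)
      then show ?thesis using that c \<open>j < s\<close> by (auto simp: y_def y'_def)
    qed
    have x0v: "x0 \<in> vecs s" unfolding x0_def by (rule vmm_vecs)
    have x0I: "\<forall>i'\<in>I. x0 i' = a i'" using xi Ii by simp
    have x0J: "\<forall>j\<in>J. vec_mat_mult s x0 Nm j = b j" using yJ by simp
    show ?thesis using count_translate[OF I(1) J(1) x0v x0I x0J] .
  qed
  have "linear_AONT 1 2 s 2 (Mm :: nat \<Rightarrow> nat \<Rightarrow> 'a)"
    unfolding linear_AONT_def
  proof (intro conjI exI[of _ Nm] allI impI)
    show "card (UNIV :: 'a set) = 2" by (rule assms(1))
    show "is_inverse_mat s (Mm :: nat \<Rightarrow> nat \<Rightarrow> 'a) Nm" by (rule inv)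
    fix I J :: "nat set" and a b a' b' :: "nat \<Rightarrow> 'a"
    assume h: "I \<subseteq> {0..<s}" "card I = 1" "J \<subseteq> {0..<s}" "card J = s - 2"
    show "aont_count s Nm I J a b = aont_count s Nm I J a' b'"
      using key[OF h, of a b] key[OF h, of a' b'] by simp
  qed
  then show ?thesis by blast
qed

end
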